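(* For each $i\in\{1,2,3\}$, the osculating circle of $\mathcal{E}$ at $P_i$ (the circle centered at $P_i''$ passing through $P_i$) passes through both $M$ and the cusp $P_i'$. Equivalently, the circle through $M,P_i,P_i'$ osculates $\mathcal{E}$ at $P_i$, and its center lies on the evolute of $\mathcal{E}$ at parameter $t_i$.
   Context: Let $a>b>0$ and $c>0$ with $c^2=a^2-b^2$. Let $\mathcal{E}$ be the ellipse $x^2/a^2+y^2/b^2=1$ with center $O=(0,0)$, parametrized by $P(t)=(a\cos t,b\sin t)$. Fix $u\in\mathbb{R}$ and let $M=M_u=(a\cos u,b\sin u)\in\mathcal{E}$. Let $\Delta_u(t)=(x_u(t),y_u(t))$, where $x_u(t)=\frac1a\big(c^2(1+\cos(t+u))\cos t-a^2\cos u\big)$ and $y_u(t)=\frac1b\big(c^2\cos t\sin(t+u)-c^2\sin t-a^2\sin u\big)$ (the negative pedal curve of $\mathcal{E}$ with respect to $M$, i.e. the envelope of the lines through $P(t)$ perpendicular to $P(t)-M$). For $i=1,2,3$ let $t_i=-u/3-2\pi(i-1)/3$, $P_i=P(t_i)$, $P_i'=\Delta_u(t_i)$ (the cusps), and $P_i''=\left(\frac{c^2\cos^3 t_i}{a},-\frac{c^2\sin^3 t_i}{b}\right)$, the point of the evolute $\mathcal{E}^*(t)=\left(\frac{c^2\cos^3t}{a},-\frac{c^2\sin^3 t}{b}\right)$ of $\mathcal{E}$ at $t_i$, i.e. the center of curvature of $\mathcal{E}$ at $P_i$. *)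

theory Defs
  imports "HOL-Analysis.Analysis"
begin

definition ell_pt :: "real \<Rightarrow> real \<Rightarrow> real \<Rightarrow> real \<times> real" where
  "ell_pt a b t = (a * cos t, b * sin t)"

text \<open>Negative pedal curve of the ellipse with respect to M_u (c^2 = a^2 - b^2).\<close>
definition neg_pedal :: "real \<Rightarrow> real \<Rightarrow> real \<Rightarrow> real \<Rightarrow> real \<Rightarrow> real \<times> real" where
  "neg_pedal a b c u t =
     ((c^2 * (1 + cos (t + u)) * cos t - a^2 * cos u) / a,
      (c^2 * cos t * sin (t + u) - c^2 * sin t - a^2 * sin u) / b)"

definition evolute :: "real \<Rightarrow> real \<Rightarrow> real \<Rightarrow> real \<Rightarrow> real \<times> real" where
  "evolute a b c t = (c^2 * (cos t)^3 / a, - (c^2 * (sin t)^3 / b))"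

definition cusp_par :: "real \<Rightarrow> nat \<Rightarrow> real" where
  "cusp_par u i = - u / 3 - 2 * pi * (real i - 1) / 3"

end

theory Submission
  imports Defs
begin

lemma per2pi: "cos (x - 2*pi*real k) = cos x" "sin (x - 2*pi*real k) = sin x"
proof -
  have "cos (2*pi*real k) = 1" "sin (2*pi*real k) = 0"
    using cos_int_2pin[of "int k"] sin_int_2pin[of "int k"] by simp_all
  thus "cos (x - 2*pi*real k) = cos x" "sin (x - 2*pi*real k) = sin x"
    by (simp_all add: cos_diff sin_diff)
qed

lemma alg:
  fixes a b c x y :: real
  assumes "a > 0" "b > 0" "c^2 = a^2 - b^2" "x^2 + y^2 = 1"
  shows "(c^2*x^3/a - a*(4*x^3 - 3*x))^2 + (-(c^2*y^3/b) - b*(-(3*y - 4*y^3)))^2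
        = (c^2*x^3/a - a*x)^2 + (-(c^2*y^3/b) - b*y)^2"
    and "(c^2*x^3/a - (c^2*(1+(2*x^2 - 1))*x - a^2*(4*x^3 - 3*x))/a)^2 + (-(c^2*y^3/b) - (c^2*x*(-(2*x*y)) - c^2*y - a^2*(-(3*y - 4*y^3)))/b)^2
        = (c^2*x^3/a - a*x)^2 + (-(c^2*y^3/b) - b*y)^2"
  using assms
   apply (simp_all add: field_simps)
  by algebra+

theorem proposition3p3:
  fixes a b c u :: real and i :: nat
  assumes "a > b" and "b > 0" and "c > 0" and "c^2 = a^2 - b^2"
    and "i \<in> {1, 2, 3}"
  shows "dist (evolute a b c (cusp_par u i)) (ell_pt a b u)
           = dist (evolute a b c (cusp_par u i)) (ell_pt a b (cusp_par u i))
       \<and> dist (evolute a b c (cusp_par u i)) (neg_pedal a b c u (cusp_par u i))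
           = dist (evolute a b c (cusp_par u i)) (ell_pt a b (cusp_par u i))"
proof -
  define t where "t = cusp_par u i"
  define k where "k = i - 1"
  have ik: "real i - 1 = real k" using assms(5) by (auto simp: k_def)
  have u: "u = - (3*t) - 2*pi*real k" unfolding t_def cusp_par_def ik by simp
  have tu: "t + u = - (2*t) - 2*pi*real k" using u by simp
  have s3: "sin (3*t) = 3 * sin t - 4 * sin t ^ 3"
  proof -
    have "sin (3*t) = sin (2*t + t)" by (simp add: algebra_simps)
    also have "\<dots> = 2 * sin t * cos t * cos t + (cos t ^ 2 - sin t ^ 2) * sin t"
      by (simp only: sin_add sin_double cos_double)
    also have "\<dots> = 3 * sin t - 4 * sin t ^ 3"
      using sin_cos_squared_add[of t] by algebra
    finally show ?thesis .
  qed
  have cu: "cos u = 4 * cos t ^ 3 - 3 * cos t"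
    unfolding u using per2pi(1)[of "-(3*t)" k] by (simp add: cos_treble_cos)
  have su: "sin u = - (3 * sin t - 4 * sin t ^ 3)"
    unfolding u using per2pi(2)[of "-(3*t)" k] s3 by simp
  have ctu: "cos (t + u) = 2 * cos t ^ 2 - 1"
    unfolding tu using per2pi(1)[of "-(2*t)" k] by (simp add: cos_double_cos)
  have stu: "sin (t + u) = - (2 * cos t * sin t)"
    unfolding tu using per2pi(2)[of "-(2*t)" k] by (simp add: sin_double)
  have a0: "a > 0" using assms by simp
  note A = alg[OF a0 assms(2) assms(4) sin_cos_squared_add2[of t]]
  show ?thesis
    unfolding t_def[symmetric] dist_prod_def evolute_def ell_pt_def neg_pedal_def dist_real_def
    using A by (simp add: cu su ctu stu mult.commute)
qed

end
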